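(* For each $y\in\mathbb{Z}_p$, the map $S^y:C(\mathbb{Z}_p,\mathbb{C}_p)\to C(\mathbb{Z}_p,\mathbb{C}_p)$ is an isometric automorphism of the $\mathbb{C}_p$-Banach space $C(\mathbb{Z}_p,\mathbb{C}_p)$ (i.e. $\|S^y(\phi)\|=\|\phi\|$ for all $\phi$), with inverse $S^{-y}$.
   Context: Fix a prime $p$. $\mathbb{C}_p$ denotes the completion of an algebraic closure of $\mathbb{Q}_p$, with absolute value $|\cdot|$ normalized by $|p|=1/p$. $C(\mathbb{Z}_p,\mathbb{C}_p)$ is the $\mathbb{C}_p$-Banach space of continuous functions $\mathbb{Z}_p\to\mathbb{C}_p$ with the sup-norm $\|\cdot\|$. For $n\in\mathbb{Z}_{\ge0}$ and $x\in\mathbb{Z}_p$, $\binom{x}{n}=x(x-1)\cdots(x-n+1)/n!$. For $y\in\mathbb{Z}_p$ and $\phi\in C(\mathbb{Z}_p,\mathbb{C}_p)$ define $S^y(\phi)\in C(\mathbb{Z}_p,\mathbb{C}_p)$ by $S^y(\phi)(x)=\sum_{k\ge0}(-1)^k k!\binom yk\binom xk\phi(x-k)$ (the series converges uniformly in $(x,y)$). *)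

theory Defs
  imports "HOL-Computational_Algebra.Polynomial"
begin

text \<open>C_p is modelled abstractly: a field 'a of characteristic 0 with an absolute
value absv that is non-archimedean, satisfies absv p = 1/p, is complete,
algebraically closed, and in which the elements algebraic over Q are dense.
This characterises the completion of an algebraic closure of Q_p
(i.e. C_p) up to isometric isomorphism.\<close>

definition nonarch_absv :: "('a::field \<Rightarrow> real) \<Rightarrow> bool" where
  "nonarch_absv absv \<longleftrightarrow>
     (\<forall>x. absv x \<ge> 0) \<and> (\<forall>x. absv x = 0 \<longleftrightarrow> x = 0) \<and>
     (\<forall>x y. absv (x * y) = absv x * absv y) \<and>
     (\<forall>x y. absv (x + y) \<le> max (absv x) (absv y))"

definition absv_cauchy :: "('a::field \<Rightarrow> real) \<Rightarrow> (nat \<Rightarrow> 'a) \<Rightarrow> bool" where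
  "absv_cauchy absv s \<longleftrightarrow>
     (\<forall>e>0. \<exists>N. \<forall>m\<ge>N. \<forall>n\<ge>N. absv (s m - s n) < e)"

definition absv_tendsto :: "('a::field \<Rightarrow> real) \<Rightarrow> (nat \<Rightarrow> 'a) \<Rightarrow> 'a \<Rightarrow> bool" where
  "absv_tendsto absv s l \<longleftrightarrow> (\<forall>e>0. \<exists>N. \<forall>n\<ge>N. absv (s n - l) < e)"

definition is_Cp :: "nat \<Rightarrow> ('a::field_char_0 \<Rightarrow> real) \<Rightarrow> bool" where
  "is_Cp p absv \<longleftrightarrow>
     prime p \<and> nonarch_absv absv \<and>
     absv (of_nat p) = 1 / real p \<and>
     (\<forall>s. absv_cauchy absv s \<longrightarrow> (\<exists>l. absv_tendsto absv s l)) \<and>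
     (\<forall>q :: 'a poly. degree q > 0 \<longrightarrow> (\<exists>x. poly q x = 0)) \<and>
     (\<forall>x. \<forall>e>0. \<exists>z. (\<exists>q :: int poly. q \<noteq> 0 \<and> poly (map_poly of_int q) z = 0)
                     \<and> absv (x - z) < e)"

definition Zp :: "('a::field \<Rightarrow> real) \<Rightarrow> 'a set" where
  "Zp absv = {x. \<forall>e>0. \<exists>n::nat. absv (x - of_nat n) < e}"

definition cont_on_Zp :: "('a::field \<Rightarrow> real) \<Rightarrow> ('a \<Rightarrow> 'a) \<Rightarrow> bool" where
  "cont_on_Zp absv f \<longleftrightarrow>
     (\<forall>x\<in>Zp absv. \<forall>e>0. \<exists>d>0. \<forall>x'\<in>Zp absv.
        absv (x' - x) < d \<longrightarrow> absv (f x' - f x) < e)"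

definition sup_norm :: "('a::field \<Rightarrow> real) \<Rightarrow> ('a \<Rightarrow> 'a) \<Rightarrow> real" where
  "sup_norm absv f = Sup ((\<lambda>x. absv (f x)) ` Zp absv)"

definition absv_suminf :: "('a::field \<Rightarrow> real) \<Rightarrow> (nat \<Rightarrow> 'a) \<Rightarrow> 'a" where
  "absv_suminf absv f = (THE s. absv_tendsto absv (\<lambda>n. \<Sum>k<n. f k) s)"

definition S_op :: "('a::field_char_0 \<Rightarrow> real) \<Rightarrow> 'a \<Rightarrow> ('a \<Rightarrow> 'a) \<Rightarrow> 'a \<Rightarrow> 'a" where
  "S_op absv y phi x = absv_suminf absv
     (\<lambda>k. (-1)^k * fact k * (y gchoose k) * (x gchoose k) * phi (x - of_nat k))"

end

theory Submission
  imports Defs "HOL-Computational_Algebra.Formal_Power_Series" "HOL-Analysis.Abstract_Metric_Spaces"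
begin


locale cpx =
  fixes absv :: "'a::field_char_0 \<Rightarrow> real" and p :: nat
  assumes Cp: "is_Cp p absv"
begin

lemma prime_p: "prime p" using Cp by (simp add: is_Cp_def)
lemma p_ge2: "p \<ge> 2" using prime_p prime_ge_2_nat by blast
lemma na: "nonarch_absv absv" using Cp by (simp add: is_Cp_def)
lemma a_nonneg[simp]: "absv x \<ge> 0" using na by (simp add: nonarch_absv_def)
lemma a_zero[simp]: "absv x = 0 \<longleftrightarrow> x = 0" using na by (simp add: nonarch_absv_def)
lemma a_mult: "absv (x * y) = absv x * absv y" using na by (simp add: nonarch_absv_def)
lemma a_add: "absv (x + y) \<le> max (absv x) (absv y)" using na by (simp add: nonarch_absv_def)
lemma a_p: "absv (of_nat p) = 1 / real p" using Cp by (simp add: is_Cp_def)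
lemma a_complete: "absv_cauchy absv s \<Longrightarrow> \<exists>l. absv_tendsto absv s l"
  using Cp by (simp add: is_Cp_def)

lemma a_0[simp]: "absv 0 = 0" by simp

lemma a_one[simp]: "absv 1 = 1"
proof -
  have "absv 1 = absv 1 * absv 1" using a_mult[of 1 1] by simp
  moreover have "absv 1 \<noteq> 0" by simp
  ultimately show ?thesis by (metis mult_cancel_left1)
qed

lemma a_m1[simp]: "absv (-1) = 1"
proof -
  have h: "absv (-1) * absv (-1) = 1" using a_mult[of "-1" "-1"] by simp
  have "(absv (-1) - 1) * (absv (-1) + 1) = 0" using h by (simp add: algebra_simps)
  moreover have "absv (-1) \<ge> 0" by simp
  ultimately show ?thesis by auto
qed

lemma a_minus[simp]: "absv (- x) = absv x"
  using a_mult[of "-1" x] by simp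

lemma a_commute: "absv (x - y) = absv (y - x)"
  by (metis a_minus minus_diff_eq)

lemma a_diff: "absv (x - y) \<le> max (absv x) (absv y)"
  using a_add[of x "-y"] by simp

lemma a_tri: "absv (x - z) \<le> max (absv (x - y)) (absv (y - z))"
  using a_add[of "x - y" "y - z"] by simp

lemma a_pow: "absv (x ^ n) = absv x ^ n"
  by (induction n) (auto simp: a_mult)

lemma a_prod: "absv (prod f A) = prod (\<lambda>i. absv (f i)) A"
  by (induction A rule: infinite_finite_induct) (auto simp: a_mult)

lemma a_nat: "absv (of_nat n) \<le> 1"
proof (induction n)
  case 0 then show ?case by simp
next
  case (Suc n)
  have "absv (of_nat n + 1) \<le> max (absv (of_nat n)) (absv 1)" by (rule a_add)
  then show ?case using Suc by (simp add: add.commute)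
qed

lemma a_int: "absv (of_int i) \<le> 1"
proof (cases "i \<ge> 0")
  case True
  then have "(of_int i :: 'a) = of_nat (nat i)" by simp
  then show ?thesis using a_nat[of "nat i"] by simp
next
  case False
  then have "(of_int i :: 'a) = - (of_nat (nat (-i)))" by simp
  then show ?thesis using a_nat[of "nat (-i)"] by simp
qed

lemma a_sum: assumes "\<And>k. k \<in> A \<Longrightarrow> absv (f k) \<le> B" "0 \<le> B"
  shows "absv (sum f A) \<le> B"
  using assms
proof (induction A rule: infinite_finite_induct)
  case (insert x F)
  have "absv (sum f (insert x F)) = absv (f x + sum f F)" using insert by simp
  also have "\<dots> \<le> max (absv (f x)) (absv (sum f F))" by (rule a_add)
  also have "\<dots> \<le> B" using insert by auto
  finally show ?case .
qed auto

lemma a_pp: "absv (of_nat (p ^ m)) = (1 / real p) ^ m"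
  by (simp only: of_nat_power a_pow a_p)

lemma a_mult_le1: "absv a \<le> 1 \<Longrightarrow> absv (a * b) \<le> absv b"
  by (simp add: a_mult mult_left_le_one_le)

lemma a_pp_mult: "absv (of_nat (p ^ m * q)) \<le> (1 / real p) ^ m"
proof -
  have "absv (of_nat (p ^ m * q)) = (1 / real p) ^ m * absv (of_nat q)"
    by (simp only: of_nat_mult a_mult a_pp)
  also have "\<dots> \<le> (1 / real p) ^ m" using a_nat[of q] by (intro mult_right_le_one_le) auto
  finally show ?thesis .
qed

lemma fact_dvd_pm: "p ^ m dvd fact (p * m)"
proof (induction m)
  case 0 then show ?case by simp
next
  case (Suc m)
  have "p * Suc m = Suc (p * m + p - 1)" using p_ge2 by simp
  then have f: "fact (p * Suc m) = (of_nat (p * Suc m) :: nat) * fact (p * m + p - 1)"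
    by (metis fact_Suc of_nat_id)
  have "fact (p * m) dvd (fact (p * m + p - 1) :: nat)" by (rule fact_dvd) (use p_ge2 in simp)
  then have "p ^ m dvd (fact (p * m + p - 1) :: nat)" using Suc dvd_trans by blast
  then have "p ^ m * p dvd (p * Suc m) * (fact (p * m + p - 1) :: nat)"
    by (metis mult.commute mult_dvd_mono dvd_triv_left)
  then show ?case using f by (simp add: mult.commute)
qed

definition B :: "nat \<Rightarrow> real" where "B k = (1 / real p) ^ (k div p)"

lemma B_nonneg: "0 \<le> B k" by (simp add: B_def)
lemma B_le1: "B k \<le> 1" using p_ge2 by (simp add: B_def power_le_one)
lemma B_mono: "k \<le> m \<Longrightarrow> B m \<le> B k"
  unfolding B_def using p_ge2 by (intro power_decreasing div_le_mono) auto

lemma a_fact: "absv (fact k) \<le> B k"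
proof -
  have "p * (k div p) \<le> k" by simp
  then have "fact (p * (k div p)) dvd (fact k :: nat)" by (rule fact_dvd)
  then have "p ^ (k div p) dvd (fact k :: nat)" using fact_dvd_pm dvd_trans by blast
  then obtain q where q: "(fact k :: nat) = p ^ (k div p) * q" by blast
  have "(fact k :: 'a) = of_nat (fact k)" by simp
  also have "\<dots> = of_nat (p ^ (k div p) * q)" using q by simp
  finally show ?thesis using a_pp_mult unfolding B_def by simp
qed

lemma pinv_small: "e > 0 \<Longrightarrow> \<exists>m. (1 / real p) ^ m < e"
  using p_ge2 by (intro real_arch_pow_inv) auto

lemma B_small: assumes "e > 0" shows "\<exists>N. \<forall>k\<ge>N. B k < e"
proof -
  obtain m where m: "(1 / real p) ^ m < e" using pinv_small assms by blast
  have "B k < e" if "k \<ge> p * m" for k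
  proof -
    have "m \<le> k div p" using that p_ge2
      by (metis div_le_mono nonzero_mult_div_cancel_left not_numeral_le_zero le_0_eq)
    then have "B k \<le> (1 / real p) ^ m" unfolding B_def using p_ge2
      by (intro power_decreasing) auto
    then show ?thesis using m by simp
  qed
  then show ?thesis by blast
qed

end


context cpx
begin

lemma int_approx: assumes "e > 0" shows "\<exists>n::nat. absv (of_int i - of_nat n) < e"
proof -
  obtain m where m: "(1 / real p) ^ m < e" using pinv_small assms by blast
  have pm: "int (p ^ m) \<ge> 1" using p_ge2 by simp
  define n where "n = nat (i + int (p ^ m) * \<bar>i\<bar>)"
  have "i + int (p ^ m) * \<bar>i\<bar> \<ge> 0"
  proof -
    have "int (p ^ m) * \<bar>i\<bar> \<ge> 1 * \<bar>i\<bar>" using pm by (intro mult_right_mono) auto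
    then show ?thesis by linarith
  qed
  then have n: "int n = i + int (p ^ m) * \<bar>i\<bar>" unfolding n_def by simp
  have e1: "i - int n = - int (p ^ m * nat \<bar>i\<bar>)" using n by simp
  have "(of_int i :: 'a) - of_nat n = of_int (i - int n)" by simp
  also have "\<dots> = of_int (- int (p ^ m * nat \<bar>i\<bar>))" by (simp only: e1)
  also have "\<dots> = - of_nat (p ^ m * nat \<bar>i\<bar>)" by (simp only: of_int_minus of_int_of_nat_eq)
  finally have eq: "(of_int i :: 'a) - of_nat n = - of_nat (p ^ m * nat \<bar>i\<bar>)" .
  have "absv ((of_int i :: 'a) - of_nat n) \<le> (1 / real p) ^ m"
    by (simp only: eq a_minus a_pp_mult)
  then have "absv ((of_int i :: 'a) - of_nat n) < e" using m by simp
  then show ?thesis by blast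
qed

lemma Zp_int: "x \<in> Zp absv \<longleftrightarrow> (\<forall>e>0. \<exists>i::int. absv (x - of_int i) < e)"
proof
  assume "x \<in> Zp absv"
  then show "\<forall>e>0. \<exists>i::int. absv (x - of_int i) < e"
  proof (safe)
    fix e :: real assume "e > 0"
    then obtain n::nat where "absv (x - of_nat n) < e" using \<open>x \<in> Zp absv\<close> unfolding Zp_def by blast
    then have "absv (x - of_int (int n)) < e" by simp
    then show "\<exists>i::int. absv (x - of_int i) < e" by blast
  qed
next
  assume h: "\<forall>e>0. \<exists>i::int. absv (x - of_int i) < e"
  show "x \<in> Zp absv" unfolding Zp_def
  proof (safe)
    fix e :: real assume e: "e > 0"
    obtain i where i: "absv (x - of_int i) < e" using h e by blast
    obtain n where n: "absv (of_int i - of_nat n) < e" using int_approx e by blast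
    have "absv (x - of_nat n) \<le> max (absv (x - of_int i)) (absv (of_int i - of_nat n))" by (rule a_tri)
    then have "absv (x - of_nat n) < e" using i n by simp
    then show "\<exists>n::nat. absv (x - of_nat n) < e" by blast
  qed
qed

lemma Zp_closed: assumes "\<And>e. e > 0 \<Longrightarrow> \<exists>z\<in>Zp absv. absv (x - z) < e" shows "x \<in> Zp absv"
  unfolding Zp_def
proof (safe)
  fix e :: real assume e: "e > 0"
  obtain z where z: "z \<in> Zp absv" "absv (x - z) < e" using assms e by blast
  obtain n::nat where n: "absv (z - of_nat n) < e" using z e unfolding Zp_def by blast
  have "absv (x - of_nat n) \<le> max (absv (x - z)) (absv (z - of_nat n))" by (rule a_tri)
  then have "absv (x - of_nat n) < e" using z n by simp
  then show "\<exists>n::nat. absv (x - of_nat n) < e" by blast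
qed

lemma Zp_nat[simp]: "of_nat n \<in> Zp absv"
  unfolding Zp_def by (auto intro!: exI[of _ n])

lemma Zp_0[simp]: "0 \<in> Zp absv" using Zp_nat[of 0] by simp

lemma Zp_minus: assumes "x \<in> Zp absv" shows "- x \<in> Zp absv"
proof -
  have "\<exists>i::int. absv (- x - of_int i) < e" if e: "e > 0" for e
  proof -
    obtain i where i: "absv (x - of_int i) < e" using assms e unfolding Zp_int by blast
    have "absv (- x - of_int (- i)) = absv (- (x - of_int i))" by (simp add: algebra_simps)
    also have "\<dots> = absv (x - of_int i)" by (rule a_minus)
    finally have "absv (- x - of_int (- i)) < e" using i by simp
    then show ?thesis by blast
  qed
  then show ?thesis using Zp_int by blast
qed

lemma Zp_diff_nat: assumes "x \<in> Zp absv" shows "x - of_nat k \<in> Zp absv"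
proof -
  have "\<exists>i::int. absv (x - of_nat k - of_int i) < e" if e: "e > 0" for e
  proof -
    obtain i where i: "absv (x - of_int i) < e" using assms e unfolding Zp_int by blast
    have "x - of_nat k - of_int (i - int k) = x - of_int i" by simp
    then have "absv (x - of_nat k - of_int (i - int k)) < e" using i by simp
    then show ?thesis by blast
  qed
  then show ?thesis using Zp_int by blast
qed

lemma Zp_le1: assumes "x \<in> Zp absv" shows "absv x \<le> 1"
proof -
  obtain n::nat where n: "absv (x - of_nat n) < 1" using assms unfolding Zp_def by fastforce
  have "absv x = absv ((x - of_nat n) + of_nat n)" by simp
  also have "\<dots> \<le> max (absv (x - of_nat n)) (absv (of_nat n :: 'a))" by (rule a_add)
  finally show ?thesis using n a_nat[of n] by auto
qed

lemma le1_diff_nat: "absv x \<le> 1 \<Longrightarrow> absv (x - of_nat i) \<le> 1"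
  using a_diff[of x "of_nat i"] a_nat[of i] by auto

lemma prod_le1: "absv x \<le> 1 \<Longrightarrow> absv (\<Prod>i=0..<k. x - of_nat i) \<le> 1"
  unfolding a_prod by (intro prod_le_1) (auto intro: le1_diff_nat)

lemma prod_diff:
  assumes "absv x \<le> 1" "absv x' \<le> 1"
  shows "absv ((\<Prod>i=0..<k. x - of_nat i) - (\<Prod>i=0..<k. x' - of_nat i)) \<le> absv (x - x')"
proof (induction k)
  case 0 then show ?case by simp
next
  case (Suc k)
  define A where "A = (\<Prod>i=0..<k. x - of_nat i)"
  define A' where "A' = (\<Prod>i=0..<k. x' - of_nat i)"
  have A: "absv A \<le> 1" unfolding A_def by (rule prod_le1[OF assms(1)])
  have B': "absv (x' - of_nat k) \<le> 1" by (rule le1_diff_nat[OF assms(2)])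
  have "(\<Prod>i=0..<Suc k. x - of_nat i) - (\<Prod>i=0..<Suc k. x' - of_nat i)
     = A * (x - x') + (A - A') * (x' - of_nat k)"
    unfolding A_def A'_def by (simp add: algebra_simps)
  also have "absv \<dots> \<le> max (absv (A * (x - x'))) (absv ((A - A') * (x' - of_nat k)))"
    by (rule a_add)
  also have "\<dots> \<le> absv (x - x')"
  proof -
    have "absv (A * (x - x')) \<le> absv (x - x')" using A by (rule a_mult_le1)
    moreover have "absv ((A - A') * (x' - of_nat k)) \<le> absv (A - A')"
      using a_mult_le1[OF B', of "A - A'"] by (simp add: mult.commute)
    ultimately show ?thesis using Suc unfolding A_def A'_def by auto
  qed
  finally show ?case .
qed

lemma fact_pos: "absv (fact k :: 'a) > 0"
proof -
  have "(fact k :: 'a) \<noteq> 0" by simp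
  then have "absv (fact k :: 'a) \<noteq> 0" by simp
  then show ?thesis using a_nonneg[of "fact k"] by linarith
qed

lemma gch_cont:
  assumes "absv x \<le> 1" "absv x' \<le> 1"
  shows "absv ((x gchoose k) - (x' gchoose k)) \<le> absv (x - x') / absv (fact k :: 'a)"
proof -
  have "fact k * ((x gchoose k) - (x' gchoose k))
      = (\<Prod>i=0..<k. x - of_nat i) - (\<Prod>i=0..<k. x' - of_nat i)"
    by (simp add: right_diff_distrib gbinomial_mult_fact)
  then have "absv (fact k * ((x gchoose k) - (x' gchoose k))) \<le> absv (x - x')"
    using prod_diff[OF assms, of k] by simp
  then have "absv (fact k :: 'a) * absv ((x gchoose k) - (x' gchoose k)) \<le> absv (x - x')"
    by (simp only: a_mult)
  then show ?thesis
    using fact_pos[of k] by (simp add: field_simps)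
qed

lemma gch_le1: assumes "x \<in> Zp absv" shows "absv (x gchoose k) \<le> 1"
proof -
  obtain n::nat where n: "absv (x - of_nat n) < absv (fact k :: 'a)"
    using assms fact_pos[of k] unfolding Zp_def by blast
  have d: "absv ((x gchoose k) - (of_nat n gchoose k)) \<le> absv (x - of_nat n) / absv (fact k :: 'a)"
    by (rule gch_cont[OF Zp_le1[OF assms] a_nat])
  have "absv (x - of_nat n) / absv (fact k :: 'a) < 1" using n fact_pos[of k] by simp
  with d have d1: "absv ((x gchoose k) - (of_nat n gchoose k)) \<le> 1" by simp
  have "absv ((of_nat n gchoose k) :: 'a) \<le> 1" using a_nat[of "n choose k"]
    by (simp add: binomial_gbinomial[symmetric])
  moreover have "absv (x gchoose k) \<le> max (absv ((x gchoose k) - (of_nat n gchoose k))) (absv (of_nat n gchoose k :: 'a))"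
    using a_add[of "(x gchoose k) - (of_nat n gchoose k)" "of_nat n gchoose k"] by simp
  ultimately show ?thesis using d1 by auto
qed

end


context cpx
begin

lemma tendsto_unique:
  assumes "absv_tendsto absv s l" "absv_tendsto absv s l'" shows "l = l'"
proof (rule ccontr)
  assume ne: "l \<noteq> l'"
  define e where "e = absv (l - l')"
  have "absv (l - l') \<noteq> 0" using ne by simp
  then have e: "e > 0" using a_nonneg[of "l - l'"] unfolding e_def by linarith
  obtain N1 where N1: "\<forall>n\<ge>N1. absv (s n - l) < e" using assms(1) e unfolding absv_tendsto_def by blast
  obtain N2 where N2: "\<forall>n\<ge>N2. absv (s n - l') < e" using assms(2) e unfolding absv_tendsto_def by blast
  define n where "n = max N1 N2"
  have a: "absv (s n - l) < e" and b: "absv (s n - l') < e" using N1 N2 unfolding n_def by auto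
  have "absv (l - l') \<le> max (absv (l - s n)) (absv (s n - l'))" by (rule a_tri)
  also have "absv (l - s n) = absv (s n - l)" by (rule a_commute)
  finally show False using a b unfolding e_def by simp
qed

lemma suminf_eq:
  assumes "absv_tendsto absv (\<lambda>n. \<Sum>k<n. f k) s" shows "absv_suminf absv f = s"
  unfolding absv_suminf_def using assms tendsto_unique by blast

lemma partial_tail:
  fixes f :: "nat \<Rightarrow> 'a" and n N :: nat
  assumes "\<And>k. k \<ge> N \<Longrightarrow> absv (f k) \<le> C" "C \<ge> 0" "n \<ge> N"
  shows "absv ((\<Sum>k<n. f k) - (\<Sum>k<N. f k)) \<le> C"
  using assms(3)
proof (induction n rule: dec_induct)
  case base then show ?case using assms(2) by simp
next
  case (step n)
  have "(\<Sum>k<Suc n. f k) - (\<Sum>k<N. f k) = ((\<Sum>k<n. f k) - (\<Sum>k<N. f k)) + f n" by simp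
  also have "absv \<dots> \<le> max (absv ((\<Sum>k<n. f k) - (\<Sum>k<N. f k))) (absv (f n))" by (rule a_add)
  finally show ?case using step assms(1)[of n] by simp
qed

lemma series_conv:
  assumes "\<And>e. e > 0 \<Longrightarrow> \<exists>N. \<forall>k\<ge>N. absv (f k) \<le> e"
  shows "\<exists>s. absv_tendsto absv (\<lambda>n. \<Sum>k<n. f k) s"
proof -
  have "absv_cauchy absv (\<lambda>n. \<Sum>k<n. f k)"
    unfolding absv_cauchy_def
  proof (safe)
    fix e :: real assume e: "e > 0"
    obtain N where N: "\<forall>k\<ge>N. absv (f k) \<le> e / 2" using assms[of "e/2"] e by auto
    have "absv ((\<Sum>k<m. f k) - (\<Sum>k<n. f k)) < e" if "m \<ge> N" "n \<ge> N" for m n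
    proof -
      have 1: "absv ((\<Sum>k<m. f k) - (\<Sum>k<N. f k)) \<le> e / 2"
        using partial_tail[of N f "e/2" m] N e that by auto
      have 2: "absv ((\<Sum>k<n. f k) - (\<Sum>k<N. f k)) \<le> e / 2"
        using partial_tail[of N f "e/2" n] N e that by auto
      have "absv ((\<Sum>k<m. f k) - (\<Sum>k<n. f k))
         \<le> max (absv ((\<Sum>k<m. f k) - (\<Sum>k<N. f k))) (absv ((\<Sum>k<N. f k) - (\<Sum>k<n. f k)))"
        by (rule a_tri)
      also have "absv ((\<Sum>k<N. f k) - (\<Sum>k<n. f k)) = absv ((\<Sum>k<n. f k) - (\<Sum>k<N. f k))"
        by (rule a_commute)
      finally show ?thesis using 1 2 e by simp
    qed
    then show "\<exists>N. \<forall>m\<ge>N. \<forall>n\<ge>N. absv ((\<Sum>k<m. f k) - (\<Sum>k<n. f k)) < e" by blast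
  qed
  then show ?thesis by (rule a_complete)
qed

lemma tail_bound:
  assumes s: "absv_tendsto absv (\<lambda>n. \<Sum>k<n. f k) s"
    and C: "\<And>k. k \<ge> N \<Longrightarrow> absv (f k) \<le> C" "C \<ge> 0"
  shows "absv (s - (\<Sum>k<N. f k)) \<le> C"
proof (rule ccontr)
  assume h: "\<not> ?thesis"
  define e where "e = absv (s - (\<Sum>k<N. f k)) - C"
  have e: "e > 0" using h unfolding e_def by simp
  obtain N0 where N0: "\<forall>n\<ge>N0. absv ((\<Sum>k<n. f k) - s) < e" using s e unfolding absv_tendsto_def by blast
  define n where "n = max N N0"
  have 1: "absv ((\<Sum>k<n. f k) - s) < e" using N0 unfolding n_def by auto
  have 2: "absv ((\<Sum>k<n. f k) - (\<Sum>k<N. f k)) \<le> C" using partial_tail[of N f C n] C unfolding n_def by auto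
  have "absv (s - (\<Sum>k<N. f k)) \<le> max (absv (s - (\<Sum>k<n. f k))) (absv ((\<Sum>k<n. f k) - (\<Sum>k<N. f k)))"
    by (rule a_tri)
  also have "absv (s - (\<Sum>k<n. f k)) = absv ((\<Sum>k<n. f k) - s)" by (rule a_commute)
  finally show False using 1 2 C(2) e unfolding e_def by (auto simp: max_def split: if_splits)
qed

definition tm :: "'a \<Rightarrow> ('a \<Rightarrow> 'a) \<Rightarrow> 'a \<Rightarrow> nat \<Rightarrow> 'a" where
  "tm y phi x k = (-1)^k * fact k * (y gchoose k) * (x gchoose k) * phi (x - of_nat k)"

lemma S_op_tm: "S_op absv y phi x = absv_suminf absv (tm y phi x)"
  unfolding S_op_def tm_def by simp

definition bnd :: "('a \<Rightarrow> 'a) \<Rightarrow> real \<Rightarrow> bool" where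
  "bnd phi M \<longleftrightarrow> (\<forall>x\<in>Zp absv. absv (phi x) \<le> M)"

lemma bnd_nonneg: "bnd phi M \<Longrightarrow> M \<ge> 0"
  unfolding bnd_def using a_nonneg[of "phi 0"] Zp_0 by (meson order_trans)

lemma tm_bound:
  assumes y: "y \<in> Zp absv" and x: "x \<in> Zp absv" and b: "bnd phi M"
  shows "absv (tm y phi x k) \<le> B k * M"
proof -
  have "absv (tm y phi x k) = absv (fact k :: 'a) * absv (y gchoose k) * absv (x gchoose k) * absv (phi (x - of_nat k))"
    unfolding tm_def by (simp add: a_mult a_pow)
  also have "\<dots> \<le> B k * 1 * 1 * M"
    using a_fact[of k] gch_le1[OF y, of k] gch_le1[OF x, of k] b Zp_diff_nat[OF x, of k]
    unfolding bnd_def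
    by (intro mult_mono) (auto simp: B_nonneg)
  finally show ?thesis by simp
qed

lemma S_conv:
  assumes y: "y \<in> Zp absv" and x: "x \<in> Zp absv" and b: "bnd phi M"
  shows "absv_tendsto absv (\<lambda>n. \<Sum>k<n. tm y phi x k) (S_op absv y phi x)"
proof -
  have M: "M \<ge> 0" using bnd_nonneg[OF b] .
  have "\<exists>N. \<forall>k\<ge>N. absv (tm y phi x k) \<le> e" if e: "e > 0" for e
  proof -
    obtain N where N: "\<forall>k\<ge>N. B k < e / (M + 1)" using B_small[of "e / (M+1)"] e M by auto
    have "absv (tm y phi x k) \<le> e" if "k \<ge> N" for k
    proof -
      have "absv (tm y phi x k) \<le> B k * M" by (rule tm_bound[OF y x b])
      also have "\<dots> \<le> e / (M + 1) * M" using N that M by (intro mult_right_mono) auto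
      also have "\<dots> \<le> e" using e M by (simp add: field_simps)
      finally show ?thesis .
    qed
    then show ?thesis by blast
  qed
  then obtain s where s: "absv_tendsto absv (\<lambda>n. \<Sum>k<n. tm y phi x k) s" using series_conv by blast
  moreover have "S_op absv y phi x = s" unfolding S_op_tm using suminf_eq[OF s] .
  ultimately show ?thesis by simp
qed

lemma S_tail:
  assumes y: "y \<in> Zp absv" and x: "x \<in> Zp absv" and b: "bnd phi M"
  shows "absv (S_op absv y phi x - (\<Sum>k<N. tm y phi x k)) \<le> B N * M"
proof (rule tail_bound[OF S_conv[OF y x b]])
  show "0 \<le> B N * M" using bnd_nonneg[OF b] B_nonneg by simp
  fix k assume "k \<ge> N"
  then have "B k * M \<le> B N * M" using B_mono bnd_nonneg[OF b] by (intro mult_right_mono) auto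
  then show "absv (tm y phi x k) \<le> B N * M" using tm_bound[OF y x b, of k] by simp
qed

lemma B0: "B 0 = 1" unfolding B_def by simp

lemma S_bound:
  assumes y: "y \<in> Zp absv" and x: "x \<in> Zp absv" and b: "bnd phi M"
  shows "absv (S_op absv y phi x) \<le> M"
  using S_tail[OF y x b, of 0] by (simp add: B0)

lemma S_bnd:
  assumes y: "y \<in> Zp absv" and b: "bnd phi M"
  shows "bnd (S_op absv y phi) M"
  using S_bound[OF y _ b] unfolding bnd_def by blast

end


context cpx
begin

lemma ms: "Metric_space UNIV (\<lambda>x y. absv (x - y))"
proof
  show "absv (x - y) = absv (y - x)" for x y by (rule a_commute)
  show "absv (x - z) \<le> absv (x - y) + absv (y - z)" for x y z
    using a_tri[of x z y] a_nonneg[of "x - y"] a_nonneg[of "y - z"] by linarith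
qed auto

lemma TB: "Metric_space.mtotally_bounded UNIV (\<lambda>x y. absv (x - y)) (Zp absv)"
  unfolding Metric_space.mtotally_bounded_def[OF ms]
proof (safe)
  fix e :: real assume e: "e > 0"
  obtain m where m: "(1 / real p) ^ m < e" using pinv_small e by blast
  define K where "K = (of_nat ` {..<p^m} :: 'a set)"
  have "Zp absv \<subseteq> (\<Union>x\<in>K. Metric_space.mball UNIV (\<lambda>x y. absv (x - y)) x e)"
  proof
    fix x assume x: "x \<in> Zp absv"
    obtain n::nat where n: "absv (x - of_nat n) < e" using x e unfolding Zp_def by blast
    define k where "k = n mod p ^ m"
    have k: "k < p ^ m" unfolding k_def using p_ge2 by simp
    have nk: "n = p ^ m * (n div p ^ m) + k" unfolding k_def by simp
    have "(of_nat n :: 'a) = of_nat (p ^ m * (n div p ^ m) + k)"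
      by (rule arg_cong[of _ _ of_nat, OF nk])
    then have "(of_nat n :: 'a) - of_nat k = of_nat (p ^ m * (n div p ^ m))"
      by (simp only: of_nat_add add_diff_cancel_right')
    then have "absv ((of_nat n :: 'a) - of_nat k) \<le> (1 / real p) ^ m" using a_pp_mult by simp
    moreover have "absv (x - of_nat k) \<le> max (absv (x - of_nat n)) (absv ((of_nat n :: 'a) - of_nat k))"
      by (rule a_tri)
    ultimately have "absv (x - of_nat k) < e" using n m by simp
    then have "absv (of_nat k - x) < e" using a_commute[of "of_nat k" x] by simp
    then have "x \<in> Metric_space.mball UNIV (\<lambda>x y. absv (x - y)) (of_nat k) e"
      by (simp add: Metric_space.in_mball[OF ms])
    then show "x \<in> (\<Union>x\<in>K. Metric_space.mball UNIV (\<lambda>x y. absv (x - y)) x e)"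
      unfolding K_def using k by blast
  qed
  moreover have "finite K" "K \<subseteq> Zp absv" unfolding K_def by auto
  ultimately show "\<exists>K. finite K \<and> K \<subseteq> Zp absv \<and> Zp absv \<subseteq> (\<Union>x\<in>K. Metric_space.mball UNIV (\<lambda>x y. absv (x - y)) x e)"
    by blast
qed

lemma cont_bnd: assumes c: "cont_on_Zp absv phi" shows "\<exists>M. bnd phi M"
proof (rule ccontr)
  assume nb: "\<not> ?thesis"
  have ex: "\<exists>x. x \<in> Zp absv \<and> absv (phi x) > real n" for n :: nat
  proof (rule ccontr)
    assume "\<not> (\<exists>x. x \<in> Zp absv \<and> absv (phi x) > real n)"
    then have "bnd phi (real n)" unfolding bnd_def by (auto simp: not_less)
    then show False using nb by blast
  qed
  obtain \<sigma> where \<sigma>0: "\<forall>n. \<sigma> n \<in> Zp absv \<and> absv (phi (\<sigma> n)) > real n"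
    using choice[of "\<lambda>n x. x \<in> Zp absv \<and> absv (phi x) > real n", OF allI[OF ex]] by (elim exE) simp
  then have \<sigma>: "\<And>n. \<sigma> n \<in> Zp absv" "\<And>n. absv (phi (\<sigma> n)) > real n" by auto
  have rs: "range \<sigma> \<subseteq> Zp absv" using \<sigma> by auto
  have "\<forall>\<sigma>::nat \<Rightarrow> 'a. range \<sigma> \<subseteq> Zp absv \<longrightarrow> (\<exists>r. strict_mono r \<and> Metric_space.MCauchy UNIV (\<lambda>x y. absv (x - y)) (\<sigma> \<circ> r))"
    using TB unfolding Metric_space.mtotally_bounded_sequentially[OF ms] by (elim conjE)
  then obtain r where r: "strict_mono r" "Metric_space.MCauchy UNIV (\<lambda>x y. absv (x - y)) (\<sigma> \<circ> r)"
    using rs by (elim allE[of _ \<sigma>] impE exE conjE)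
  have mc: "\<forall>\<epsilon>>0. \<exists>N. \<forall>n n'. N \<le> n \<longrightarrow> N \<le> n' \<longrightarrow> absv ((\<sigma> \<circ> r) n - (\<sigma> \<circ> r) n') < \<epsilon>"
    using r(2) unfolding Metric_space.MCauchy_def[OF ms] by (elim conjE)
  have "absv_cauchy absv (\<sigma> \<circ> r)"
    unfolding absv_cauchy_def
  proof (intro allI impI)
    fix e :: real assume "e > 0"
    then obtain N where "\<forall>n n'. N \<le> n \<longrightarrow> N \<le> n' \<longrightarrow> absv ((\<sigma> \<circ> r) n - (\<sigma> \<circ> r) n') < e"
      using mc by (elim allE[of _ e] impE exE) auto
    then show "\<exists>N. \<forall>m\<ge>N. \<forall>n\<ge>N. absv ((\<sigma> \<circ> r) m - (\<sigma> \<circ> r) n) < e" by (intro exI[of _ N]) simp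
  qed
  then obtain l where l: "absv_tendsto absv (\<sigma> \<circ> r) l" using a_complete by blast
  have lZ: "l \<in> Zp absv"
  proof (rule Zp_closed)
    fix e :: real assume e: "e > 0"
    obtain N where "\<forall>n\<ge>N. absv ((\<sigma> \<circ> r) n - l) < e" using l e unfolding absv_tendsto_def by blast
    then have "absv (\<sigma> (r N) - l) < e" by simp
    then have "absv (l - \<sigma> (r N)) < e" using a_commute[of l "\<sigma> (r N)"] by simp
    then show "\<exists>z\<in>Zp absv. absv (l - z) < e" using \<sigma>(1) by blast
  qed
  have "\<forall>e>0. \<exists>d>0. \<forall>x'\<in>Zp absv. absv (x' - l) < d \<longrightarrow> absv (phi x' - phi l) < e"
    using c lZ unfolding cont_on_Zp_def by blast
  then obtain d where d: "d > 0" "\<forall>x'\<in>Zp absv. absv (x' - l) < d \<longrightarrow> absv (phi x' - phi l) < 1"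
    by (elim allE[of _ 1] impE exE conjE) auto
  obtain N where N: "\<forall>n\<ge>N. absv ((\<sigma> \<circ> r) n - l) < d" using l d(1) unfolding absv_tendsto_def by blast
  obtain n0::nat where n0: "real n0 \<ge> absv (phi l) + 1" using real_arch_simple by blast
  define n where "n = max N n0"
  have "absv (\<sigma> (r n) - l) < d" using N unfolding n_def by simp
  then have 1: "absv (phi (\<sigma> (r n)) - phi l) < 1" using d(2) \<sigma>(1) by blast
  have 2: "absv (phi (\<sigma> (r n))) \<le> max (absv (phi (\<sigma> (r n)) - phi l)) (absv (phi l))"
    using a_add[of "phi (\<sigma> (r n)) - phi l" "phi l"] by simp
  have "n0 \<le> r n" using seq_suble[OF r(1), of n] unfolding n_def by simp
  then have 3: "real n0 \<le> real (r n)" by simp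
  have 4: "absv (phi (\<sigma> (r n))) > real (r n)" using \<sigma>(2) by blast
  have h0: "0 \<le> absv (phi l)" by simp
  have 5: "absv (phi (\<sigma> (r n))) < absv (phi l) + 1"
  proof (cases "absv (phi (\<sigma> (r n)) - phi l) \<le> absv (phi l)")
    case True then show ?thesis using 2 by (simp add: max_def)
  next
    case False then have "absv (phi (\<sigma> (r n))) \<le> absv (phi (\<sigma> (r n)) - phi l)" using 2 by (simp add: max_def)
    then show ?thesis using 1 h0 by linarith
  qed
  show False using 5 3 4 n0 by linarith
qed

lemma tm_cont:
  assumes y: "y \<in> Zp absv" and c: "cont_on_Zp absv phi" and b: "bnd phi M"
    and x: "x \<in> Zp absv" and e: "e > 0"
  shows "\<exists>d>0. \<forall>x'\<in>Zp absv. absv (x' - x) < d \<longrightarrow> absv (tm y phi x' k - tm y phi x k) < e"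
proof -
  have M: "M \<ge> 0" using bnd_nonneg[OF b] .
  have xk: "x - of_nat k \<in> Zp absv" using Zp_diff_nat[OF x] .
  obtain d1 where d1: "d1 > 0" "\<forall>x''\<in>Zp absv. absv (x'' - (x - of_nat k)) < d1 \<longrightarrow>
      absv (phi x'' - phi (x - of_nat k)) < e"
    using c xk e unfolding cont_on_Zp_def by blast
  define F where "F = absv (fact k :: 'a)"
  have F: "F > 0" unfolding F_def by (rule fact_pos)
  define d where "d = min d1 (e * F / (M + 1))"
  have d: "d > 0" unfolding d_def using d1 F e M by auto
  have "absv (tm y phi x' k - tm y phi x k) < e" if x': "x' \<in> Zp absv" "absv (x' - x) < d" for x'
  proof -
    define c where "c = (-1)^k * fact k * (y gchoose k)"
    have cb: "absv c \<le> 1"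
      unfolding c_def using a_fact[of k] B_le1[of k] gch_le1[OF y, of k]
      by (simp add: a_mult a_pow mult_le_one)
    have eq: "tm y phi x' k - tm y phi x k
      = c * (((x' gchoose k) - (x gchoose k)) * phi (x' - of_nat k)
            + (x gchoose k) * (phi (x' - of_nat k) - phi (x - of_nat k)))"
      unfolding tm_def c_def by (simp add: algebra_simps)
    have t1: "absv (((x' gchoose k) - (x gchoose k)) * phi (x' - of_nat k)) < e"
    proof -
      have g: "absv ((x' gchoose k) - (x gchoose k)) \<le> absv (x' - x) / F"
        unfolding F_def by (rule gch_cont[OF Zp_le1[OF x'(1)] Zp_le1[OF x]])
      have ph: "absv (phi (x' - of_nat k)) \<le> M" using b Zp_diff_nat[OF x'(1)] unfolding bnd_def by blast
      have "absv (((x' gchoose k) - (x gchoose k)) * phi (x' - of_nat k))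
          \<le> absv (x' - x) / F * M" unfolding a_mult using g ph F by (intro mult_mono) auto
      also have "\<dots> \<le> absv (x' - x) / F * (M + 1)" by (intro mult_left_mono) (use F in auto)
      also have "\<dots> < e"
      proof -
        have "absv (x' - x) < e * F / (M + 1)" using x'(2) unfolding d_def by simp
        then have "absv (x' - x) * (M + 1) < e * F" using M by (simp add: field_simps)
        then show ?thesis using F by (simp add: field_simps)
      qed
      finally show ?thesis .
    qed
    have t2: "absv ((x gchoose k) * (phi (x' - of_nat k) - phi (x - of_nat k))) < e"
    proof -
      have "absv ((x' - of_nat k) - (x - of_nat k)) < d1" using x'(2) unfolding d_def by simp
      then have "absv (phi (x' - of_nat k) - phi (x - of_nat k)) < e"
        using d1(2) Zp_diff_nat[OF x'(1)] by blast
      moreover have "absv ((x gchoose k) * (phi (x' - of_nat k) - phi (x - of_nat k)))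
          \<le> absv (phi (x' - of_nat k) - phi (x - of_nat k))"
        by (rule a_mult_le1[OF gch_le1[OF x]])
      ultimately show ?thesis by simp
    qed
    have "absv (tm y phi x' k - tm y phi x k) \<le> absv (((x' gchoose k) - (x gchoose k)) * phi (x' - of_nat k)
            + (x gchoose k) * (phi (x' - of_nat k) - phi (x - of_nat k)))"
      unfolding eq by (rule a_mult_le1[OF cb])
    also have "\<dots> \<le> max (absv (((x' gchoose k) - (x gchoose k)) * phi (x' - of_nat k)))
           (absv ((x gchoose k) * (phi (x' - of_nat k) - phi (x - of_nat k))))" by (rule a_add)
    finally show ?thesis using t1 t2 by simp
  qed
  then show ?thesis using d by blast
qed

lemma tms_cont:
  assumes y: "y \<in> Zp absv" and c: "cont_on_Zp absv phi" and b: "bnd phi M"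
    and x: "x \<in> Zp absv" and e: "e > 0"
  shows "\<exists>d>0. \<forall>x'\<in>Zp absv. absv (x' - x) < d \<longrightarrow> (\<forall>k<N. absv (tm y phi x' k - tm y phi x k) < e)"
proof (induction N)
  case 0 then show ?case by (auto intro: exI[of _ 1])
next
  case (Suc N)
  obtain d1 where d1: "d1 > 0" "\<forall>x'\<in>Zp absv. absv (x' - x) < d1 \<longrightarrow> (\<forall>k<N. absv (tm y phi x' k - tm y phi x k) < e)"
    using Suc by blast
  obtain d2 where d2: "d2 > 0" "\<forall>x'\<in>Zp absv. absv (x' - x) < d2 \<longrightarrow> absv (tm y phi x' N - tm y phi x N) < e"
    using tm_cont[OF y c b x e] by blast
  have "\<forall>x'\<in>Zp absv. absv (x' - x) < min d1 d2 \<longrightarrow> (\<forall>k<Suc N. absv (tm y phi x' k - tm y phi x k) < e)"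
    using d1 d2 less_Suc_eq by auto
  moreover have "min d1 d2 > 0" using d1 d2 by simp
  ultimately show ?case by blast
qed

lemma S_cont:
  assumes y: "y \<in> Zp absv" and c: "cont_on_Zp absv phi"
  shows "cont_on_Zp absv (S_op absv y phi)"
  unfolding cont_on_Zp_def
proof (intro ballI allI impI)
  fix x e assume x: "x \<in> Zp absv" and e: "(e::real) > 0"
  obtain M where b: "bnd phi M" using cont_bnd[OF c] by blast
  have M: "M \<ge> 0" using bnd_nonneg[OF b] .
  obtain N where N: "\<forall>k\<ge>N. B k < e / (M + 1)" using B_small[of "e / (M+1)"] e M by auto
  have BN: "B N * M < e"
  proof -
    have "B N * M \<le> e / (M + 1) * M" using N M by (intro mult_right_mono) auto
    also have "\<dots> < e" using e M by (simp add: field_simps)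
    finally show ?thesis .
  qed
  obtain d where d: "d > 0" "\<forall>x'\<in>Zp absv. absv (x' - x) < d \<longrightarrow> (\<forall>k<N. absv (tm y phi x' k - tm y phi x k) < e / 2)"
    using tms_cont[OF y c b x, of "e/2" N] e by auto
  have "absv (S_op absv y phi x' - S_op absv y phi x) < e" if x': "x' \<in> Zp absv" "absv (x' - x) < d" for x'
  proof -
    let ?P = "\<lambda>z. \<Sum>k<N. tm y phi z k"
    have 1: "absv (S_op absv y phi x' - ?P x') < e" using S_tail[OF y x'(1) b, of N] BN by simp
    have 2: "absv (S_op absv y phi x - ?P x) < e" using S_tail[OF y x b, of N] BN by simp
    have "?P x' - ?P x = (\<Sum>k<N. tm y phi x' k - tm y phi x k)" by (simp add: sum_subtractf)
    moreover have "absv (\<Sum>k<N. tm y phi x' k - tm y phi x k) \<le> e / 2"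
      using d x' e by (intro a_sum) (auto intro: less_imp_le)
    ultimately have 3: "absv (?P x' - ?P x) < e" using e by simp
    have A: "absv (S_op absv y phi x' - S_op absv y phi x)
        \<le> max (absv (S_op absv y phi x' - ?P x')) (absv (?P x' - S_op absv y phi x))" by (rule a_tri)
    have Bq: "absv (?P x' - S_op absv y phi x) \<le> max (absv (?P x' - ?P x)) (absv (?P x - S_op absv y phi x))"
      by (rule a_tri)
    have C: "absv (?P x - S_op absv y phi x) = absv (S_op absv y phi x - ?P x)" by (rule a_commute)
    have "absv (?P x' - S_op absv y phi x) < e" using Bq C 2 3 by simp
    then show ?thesis using A 1 by simp
  qed
  then show "\<exists>d>0. \<forall>x'\<in>Zp absv. absv (x' - x) < d \<longrightarrow> absv (S_op absv y phi x' - S_op absv y phi x) < e"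
    using d(1) by blast
qed

lemma tendsto_lin:
  assumes X: "absv_tendsto absv X s" and Y: "absv_tendsto absv Y t"
  shows "absv_tendsto absv (\<lambda>n. a * X n + b * Y n) (a * s + b * t)"
  unfolding absv_tendsto_def
proof (intro allI impI)
  fix e :: real assume e: "e > 0"
  define e' where "e' = e / (absv a + absv b + 1)"
  have e': "e' > 0" unfolding e'_def using e by (simp add: add_nonneg_pos)
  obtain N1 where N1: "\<forall>n\<ge>N1. absv (X n - s) < e'" using X e' unfolding absv_tendsto_def by blast
  obtain N2 where N2: "\<forall>n\<ge>N2. absv (Y n - t) < e'" using Y e' unfolding absv_tendsto_def by blast
  have D: "absv a + absv b + 1 > 0" by (simp add: add_nonneg_pos)
  have "absv a < absv a + absv b + 1" using a_nonneg[of b] by linarith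
  then have "e * absv a < e * (absv a + absv b + 1)" using e by (intro mult_strict_left_mono)
  then have ae: "absv a * e' < e" unfolding e'_def using D by (simp add: field_simps)
  have "absv b < absv a + absv b + 1" using a_nonneg[of a] by linarith
  then have "e * absv b < e * (absv a + absv b + 1)" using e by (intro mult_strict_left_mono)
  then have be: "absv b * e' < e" unfolding e'_def using D by (simp add: field_simps)
  have "absv (a * X n + b * Y n - (a * s + b * t)) < e" if "n \<ge> max N1 N2" for n
  proof -
    have eq: "a * X n + b * Y n - (a * s + b * t) = a * (X n - s) + b * (Y n - t)" by (simp add: algebra_simps)
    have 1: "absv (a * (X n - s)) < e"
    proof -
      have "absv (a * (X n - s)) \<le> absv a * e'" unfolding a_mult using N1 that
        by (intro mult_left_mono) (auto intro: less_imp_le)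
      then show ?thesis using ae by simp
    qed
    have 2: "absv (b * (Y n - t)) < e"
    proof -
      have "absv (b * (Y n - t)) \<le> absv b * e'" unfolding a_mult using N2 that
        by (intro mult_left_mono) (auto intro: less_imp_le)
      then show ?thesis using be by simp
    qed
    show ?thesis unfolding eq using a_add[of "a * (X n - s)" "b * (Y n - t)"] 1 2 by simp
  qed
  then show "\<exists>N. \<forall>n\<ge>N. absv (a * X n + b * Y n - (a * s + b * t)) < e" by blast
qed

lemma S_lin:
  assumes y: "y \<in> Zp absv" and x: "x \<in> Zp absv" and b1: "bnd phi M1" and b2: "bnd psi M2"
  shows "S_op absv y (\<lambda>t. a * phi t + b * psi t) x = a * S_op absv y phi x + b * S_op absv y psi x"
proof -
  have "absv_tendsto absv (\<lambda>n. a * (\<Sum>k<n. tm y phi x k) + b * (\<Sum>k<n. tm y psi x k))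
     (a * S_op absv y phi x + b * S_op absv y psi x)"
    by (rule tendsto_lin[OF S_conv[OF y x b1] S_conv[OF y x b2]])
  moreover have "(\<lambda>n. a * (\<Sum>k<n. tm y phi x k) + b * (\<Sum>k<n. tm y psi x k))
      = (\<lambda>n. \<Sum>k<n. tm y (\<lambda>t. a * phi t + b * psi t) x k)"
    by (simp add: tm_def sum_distrib_left sum.distrib algebra_simps)
  ultimately show ?thesis unfolding S_op_tm by (intro suminf_eq) simp
qed

lemma sup_le: assumes "bnd f M" shows "sup_norm absv f \<le> M"
proof -
  have ne: "(\<lambda>x. absv (f x)) ` Zp absv \<noteq> {}" using Zp_0 by blast
  show ?thesis unfolding sup_norm_def using assms ne unfolding bnd_def
    by (intro cSup_least) auto
qed

lemma le_sup: assumes "bnd f M" "x \<in> Zp absv" shows "absv (f x) \<le> sup_norm absv f"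
  unfolding sup_norm_def using assms unfolding bnd_def
  by (intro cSup_upper) (auto simp: bdd_above_def)

lemma bnd_sup: "bnd f M \<Longrightarrow> bnd f (sup_norm absv f)"
  using le_sup unfolding bnd_def by blast


end


context cpx
begin

definition ak :: "'a \<Rightarrow> 'a \<Rightarrow> nat \<Rightarrow> 'a" where
  "ak z x k = (-1)^k * fact k * (z gchoose k) * (x gchoose k)"

lemma tm_ak: "tm z psi x k = ak z x k * psi (x - of_nat k)"
  unfolding tm_def ak_def by simp

lemma ak_bound: assumes "z \<in> Zp absv" "x \<in> Zp absv" shows "absv (ak z x k) \<le> B k"
proof -
  have "absv (ak z x k) = absv (fact k :: 'a) * absv (z gchoose k) * absv (x gchoose k)"
    unfolding ak_def by (simp add: a_mult a_pow)
  also have "\<dots> \<le> B k * 1 * 1"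
    using a_fact[of k] gch_le1[OF assms(1), of k] gch_le1[OF assms(2), of k]
    by (intro mult_mono) (auto simp: B_nonneg)
  finally show ?thesis by simp
qed

lemma prod_split:
  fixes x :: 'a
  shows "(\<Prod>i=0..<k+j. x - of_nat i) = (\<Prod>i=0..<k. x - of_nat i) * (\<Prod>i=0..<j. x - of_nat k - of_nat i)"
proof (induction j)
  case 0 then show ?case by simp
next
  case (Suc j)
  have "(\<Prod>i=0..<k + Suc j. x - of_nat i) = (\<Prod>i=0..<k+j. x - of_nat i) * (x - of_nat (k + j))"
    by simp
  also have "\<dots> = (\<Prod>i=0..<k. x - of_nat i) * ((\<Prod>i=0..<j. x - of_nat k - of_nat i) * (x - of_nat k - of_nat j))"
  proof -
    have "x - of_nat (k + j) = x - of_nat k - of_nat j" by (simp only: of_nat_add diff_diff_eq)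
    then show ?thesis using Suc by (simp only: mult.assoc)
  qed
  also have "\<dots> = (\<Prod>i=0..<k. x - of_nat i) * (\<Prod>i=0..<Suc j. x - of_nat k - of_nat i)"
    by simp
  finally show ?case .
qed

lemma c_eq:
  "ak z x k * tm y phi (x - of_nat k) j
   = (-1)^(k+j) * ((z gchoose k) * (y gchoose j)) * (\<Prod>i=0..<k+j. x - of_nat i) * phi (x - of_nat (k+j))"
proof -
  have e1: "fact k * (x gchoose k) = (\<Prod>i=0..<k. x - of_nat i)" by (rule gbinomial_mult_fact)
  have e2: "fact j * ((x - of_nat k) gchoose j) = (\<Prod>i=0..<j. x - of_nat k - of_nat i)" by (rule gbinomial_mult_fact)
  have "ak z x k * tm y phi (x - of_nat k) j
     = (-1)^(k+j) * ((z gchoose k) * (y gchoose j)) * ((fact k * (x gchoose k)) * (fact j * ((x - of_nat k) gchoose j)))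
        * phi (x - of_nat k - of_nat j)"
    unfolding ak_def tm_def by (simp add: power_add algebra_simps)
  also have "\<dots> = (-1)^(k+j) * ((z gchoose k) * (y gchoose j)) * (\<Prod>i=0..<k+j. x - of_nat i) * phi (x - of_nat (k+j))"
    unfolding e1 e2 prod_split[symmetric] by (simp add: algebra_simps)
  finally show ?thesis .
qed

lemma diag_sum:
  assumes yz: "y + z = 0"
  shows "(\<Sum>n<L. \<Sum>k\<le>n. ak z x k * tm y phi (x - of_nat k) (n - k)) = (if L = 0 then 0 else phi x)"
proof -
  have inner: "(\<Sum>k\<le>n. ak z x k * tm y phi (x - of_nat k) (n - k))
      = (-1)^n * (\<Prod>i=0..<n. x - of_nat i) * phi (x - of_nat n) * ((z + y) gchoose n)" for n
  proof -
    have "(\<Sum>k\<le>n. ak z x k * tm y phi (x - of_nat k) (n - k))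
       = (\<Sum>k\<le>n. (-1)^n * (\<Prod>i=0..<n. x - of_nat i) * phi (x - of_nat n) * ((z gchoose k) * (y gchoose (n - k))))"
      by (intro sum.cong refl) (simp add: c_eq algebra_simps)
    also have "\<dots> = (-1)^n * (\<Prod>i=0..<n. x - of_nat i) * phi (x - of_nat n) * (\<Sum>k\<le>n. (z gchoose k) * (y gchoose (n - k)))"
      by (simp add: sum_distrib_left)
    also have "(\<Sum>k\<le>n. (z gchoose k) * (y gchoose (n - k))) = (z + y) gchoose n"
      using gbinomial_Vandermonde[of z y n] by (simp add: atMost_atLeast0)
    finally show ?thesis .
  qed
  have zy: "z + y = 0" using yz by (simp add: add.commute)
  show ?thesis
  proof (cases L)
    case 0 then show ?thesis by simp
  next
    case (Suc L')
    have "(\<Sum>n<L. \<Sum>k\<le>n. ak z x k * tm y phi (x - of_nat k) (n - k))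
        = (\<Sum>n<L. if n = 0 then phi x else 0)"
      by (intro sum.cong refl) (simp add: inner zy gbinomial_0_left)
    also have "\<dots> = phi x" using Suc by (simp add: sum.delta)
    finally show ?thesis using Suc by simp
  qed
qed

end


context cpx
begin

lemma comp_close:
  assumes y: "y \<in> Zp absv" and z: "z \<in> Zp absv" and yz: "y + z = 0"
    and b: "bnd phi M" and x: "x \<in> Zp absv" and eps: "\<epsilon> > 0"
  shows "absv (S_op absv z (S_op absv y phi) x - phi x) \<le> \<epsilon>"
proof -
  define psi where "psi = S_op absv y phi"
  have bpsi: "bnd psi M" unfolding psi_def by (rule S_bnd[OF y b])
  have M: "M \<ge> 0" using bnd_nonneg[OF b] .
  obtain N where N: "\<forall>k\<ge>N. B k < \<epsilon> / (M + 1)" using B_small[of "\<epsilon> / (M+1)"] eps M by auto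
  have BM: "B k * M \<le> \<epsilon>" if "k \<ge> N" for k
  proof -
    have "B k * M \<le> \<epsilon> / (M + 1) * M" using N M that by (intro mult_right_mono) auto
    also have "\<dots> \<le> \<epsilon>" using eps M by (simp add: field_simps)
    finally show ?thesis .
  qed
  define L where "L = 2 * N + 1"
  have LN: "L \<ge> N" "L \<noteq> 0" unfolding L_def by auto
  define Q where "Q = (\<Sum>k<L. tm z psi x k)"
  define T where "T = (\<Sum>k<L. ak z x k * (\<Sum>j<L. tm y phi (x - of_nat k) j))"
  have i: "absv (S_op absv z psi x - Q) \<le> \<epsilon>"
    using S_tail[OF z x bpsi, of L] BM[OF LN(1)] unfolding Q_def by simp
  have ii: "absv (Q - T) \<le> \<epsilon>"
  proof -
    have "Q - T = (\<Sum>k<L. ak z x k * (psi (x - of_nat k) - (\<Sum>j<L. tm y phi (x - of_nat k) j)))"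
      unfolding Q_def T_def tm_ak by (simp add: sum_subtractf right_diff_distrib)
    also have "absv \<dots> \<le> \<epsilon>"
    proof (rule a_sum)
      show "0 \<le> \<epsilon>" using eps by simp
      fix k assume "k \<in> {..<L}"
      have xk: "x - of_nat k \<in> Zp absv" by (rule Zp_diff_nat[OF x])
      have "absv (ak z x k) \<le> 1" using ak_bound[OF z x, of k] B_le1[of k] by simp
      then have "absv (ak z x k * (psi (x - of_nat k) - (\<Sum>j<L. tm y phi (x - of_nat k) j)))
          \<le> absv (psi (x - of_nat k) - (\<Sum>j<L. tm y phi (x - of_nat k) j))" by (rule a_mult_le1)
      also have "\<dots> \<le> B L * M" unfolding psi_def by (rule S_tail[OF y xk b])
      also have "\<dots> \<le> \<epsilon>" by (rule BM[OF LN(1)])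
      finally show "absv (ak z x k * (psi (x - of_nat k) - (\<Sum>j<L. tm y phi (x - of_nat k) j))) \<le> \<epsilon>" .
    qed
    finally show ?thesis .
  qed
  define g where "g = (\<lambda>k j. ak z x k * tm y phi (x - of_nat k) j)"
  define Box where "Box = {..<L} \<times> {..<L}"
  define Tri where "Tri = {(k, j). k + j < L}"
  have TB: "Tri \<subseteq> Box" unfolding Tri_def Box_def by auto
  have fB: "finite Box" unfolding Box_def by simp
  have "T = (\<Sum>k<L. \<Sum>j<L. g k j)" unfolding T_def g_def by (simp add: sum_distrib_left)
  also have "\<dots> = (\<Sum>(k, j)\<in>Box. g k j)" unfolding Box_def by (rule sum.cartesian_product)
  also have "\<dots> = (\<Sum>(k, j)\<in>Box - Tri. g k j) + (\<Sum>(k, j)\<in>Tri. g k j)"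
    by (rule sum.subset_diff[OF TB fB])
  also have "(\<Sum>(k, j)\<in>Tri. g k j) = (\<Sum>n<L. \<Sum>k\<le>n. g k (n - k))"
    unfolding Tri_def by (rule sum.triangle_reindex)
  also have "\<dots> = phi x" unfolding g_def using diag_sum[OF yz, where L=L and x=x and phi=phi] LN(2) by simp
  finally have Teq: "T - phi x = (\<Sum>(k, j)\<in>Box - Tri. g k j)" by simp
  have iii: "absv (T - phi x) \<le> \<epsilon>"
    unfolding Teq
  proof (rule a_sum)
    show "0 \<le> \<epsilon>" using eps by simp
    fix kj assume kj: "kj \<in> Box - Tri"
    obtain k j where kj': "kj = (k, j)" by (cases kj)
    have kjL: "k + j \<ge> L" using kj unfolding kj' Tri_def Box_def by auto
    have t: "absv (tm y phi (x - of_nat k) j) \<le> B j * M" by (rule tm_bound[OF y Zp_diff_nat[OF x] b])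
    have a: "absv (ak z x k) \<le> B k" by (rule ak_bound[OF z x])
    have "absv (g k j) \<le> \<epsilon>"
    proof (cases "k \<ge> N")
      case True
      have "absv (g k j) = absv (ak z x k) * absv (tm y phi (x - of_nat k) j)" unfolding g_def by (rule a_mult)
      also have "\<dots> \<le> B k * M"
      proof (rule mult_mono[OF a])
        have "B j * M \<le> M" by (rule mult_left_le_one_le[OF M B_nonneg B_le1])
        then show "absv (tm y phi (x - of_nat k) j) \<le> M" using t by linarith
      qed (auto simp: B_nonneg)
      also have "\<dots> \<le> \<epsilon>" by (rule BM[OF True])
      finally show ?thesis .
    next
      case False
      then have "j \<ge> N" using kjL unfolding L_def by linarith
      have "absv (g k j) = absv (ak z x k) * absv (tm y phi (x - of_nat k) j)" unfolding g_def by (rule a_mult)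
      also have "\<dots> \<le> 1 * (B j * M)"
        using a B_le1[of k] t by (intro mult_mono) auto
      also have "\<dots> \<le> \<epsilon>" using BM[OF \<open>j \<ge> N\<close>] by simp
      finally show ?thesis .
    qed
    then show "absv (case kj of (k, j) \<Rightarrow> g k j) \<le> \<epsilon>" unfolding kj' by simp
  qed
  have "absv (S_op absv z psi x - phi x) \<le> max (absv (S_op absv z psi x - Q)) (absv (Q - phi x))" by (rule a_tri)
  moreover have "absv (Q - phi x) \<le> max (absv (Q - T)) (absv (T - phi x))" by (rule a_tri)
  ultimately show ?thesis using i ii iii unfolding psi_def by simp
qed

lemma comp:
  assumes y: "y \<in> Zp absv" and z: "z \<in> Zp absv" and yz: "y + z = 0"
    and b: "bnd phi M" and x: "x \<in> Zp absv"
  shows "S_op absv z (S_op absv y phi) x = phi x"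
proof (rule ccontr)
  assume ne: "\<not> ?thesis"
  define D where "D = absv (S_op absv z (S_op absv y phi) x - phi x)"
  have "D \<noteq> 0" using ne unfolding D_def by simp
  then have D: "D > 0" using a_nonneg unfolding D_def by (simp add: order_less_le)
  have "D / 2 > 0" using D by simp
  then have "D \<le> D / 2" unfolding D_def by (rule comp_close[OF y z yz b x])
  then show False using D by simp
qed

end

theorem corollary6p4:
  fixes absv :: "'a::field_char_0 \<Rightarrow> real" and p :: nat and y :: 'a
  assumes Cp: "is_Cp p absv"
    and y: "y \<in> Zp absv"
  shows "(\<forall>phi. cont_on_Zp absv phi \<longrightarrow> cont_on_Zp absv (S_op absv y phi))
       \<and> (\<forall>phi psi a b. cont_on_Zp absv phi \<longrightarrow> cont_on_Zp absv psi \<longrightarrow>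
            (\<forall>x\<in>Zp absv. S_op absv y (\<lambda>t. a * phi t + b * psi t) x
                          = a * S_op absv y phi x + b * S_op absv y psi x))
       \<and> (\<forall>phi. cont_on_Zp absv phi \<longrightarrow> sup_norm absv (S_op absv y phi) = sup_norm absv phi)
       \<and> (\<forall>phi. cont_on_Zp absv phi \<longrightarrow>
            (\<forall>x\<in>Zp absv. S_op absv (- y) (S_op absv y phi) x = phi x))
       \<and> (\<forall>phi. cont_on_Zp absv phi \<longrightarrow>
            (\<forall>x\<in>Zp absv. S_op absv y (S_op absv (- y) phi) x = phi x))"
proof -
  interpret cpx absv p by unfold_locales (rule Cp)
  have my: "- y \<in> Zp absv" by (rule Zp_minus[OF y])
  have c1: "\<forall>phi. cont_on_Zp absv phi \<longrightarrow> cont_on_Zp absv (S_op absv y phi)"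
    using S_cont[OF y] by blast
  have c2: "\<forall>phi psi a b. cont_on_Zp absv phi \<longrightarrow> cont_on_Zp absv psi \<longrightarrow>
            (\<forall>x\<in>Zp absv. S_op absv y (\<lambda>t. a * phi t + b * psi t) x
                          = a * S_op absv y phi x + b * S_op absv y psi x)"
  proof (intro allI impI ballI)
    fix phi psi a b x assume c1: "cont_on_Zp absv phi" and c2: "cont_on_Zp absv psi" and x: "x \<in> Zp absv"
    obtain M1 where b1: "bnd phi M1" using cont_bnd[OF c1] by blast
    obtain M2 where b2: "bnd psi M2" using cont_bnd[OF c2] by blast
    show "S_op absv y (\<lambda>t. a * phi t + b * psi t) x = a * S_op absv y phi x + b * S_op absv y psi x"
      by (rule S_lin[OF y x b1 b2])
  qed
  have c4: "\<forall>phi. cont_on_Zp absv phi \<longrightarrow> (\<forall>x\<in>Zp absv. S_op absv (- y) (S_op absv y phi) x = phi x)"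
  proof (intro allI impI ballI)
    fix phi x assume c: "cont_on_Zp absv phi" and x: "x \<in> Zp absv"
    obtain M where b: "bnd phi M" using cont_bnd[OF c] by blast
    show "S_op absv (- y) (S_op absv y phi) x = phi x"
      by (rule comp[OF y my _ b x]) simp
  qed
  have c5: "\<forall>phi. cont_on_Zp absv phi \<longrightarrow> (\<forall>x\<in>Zp absv. S_op absv y (S_op absv (- y) phi) x = phi x)"
  proof (intro allI impI ballI)
    fix phi x assume c: "cont_on_Zp absv phi" and x: "x \<in> Zp absv"
    obtain M where b: "bnd phi M" using cont_bnd[OF c] by blast
    show "S_op absv y (S_op absv (- y) phi) x = phi x"
      by (rule comp[OF my y _ b x]) simp
  qed
  have c3: "\<forall>phi. cont_on_Zp absv phi \<longrightarrow> sup_norm absv (S_op absv y phi) = sup_norm absv phi"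
  proof (intro allI impI)
    fix phi assume c: "cont_on_Zp absv phi"
    obtain M where b: "bnd phi M" using cont_bnd c by blast
    have b': "bnd phi (sup_norm absv phi)" by (rule bnd_sup[OF b])
    have bS: "bnd (S_op absv y phi) (sup_norm absv phi)" by (rule S_bnd[OF y b'])
    have le1: "sup_norm absv (S_op absv y phi) \<le> sup_norm absv phi" by (rule sup_le[OF bS])
    have bS': "bnd (S_op absv y phi) (sup_norm absv (S_op absv y phi))" by (rule bnd_sup[OF bS])
    have "bnd (S_op absv (- y) (S_op absv y phi)) (sup_norm absv (S_op absv y phi))" by (rule S_bnd[OF my bS'])
    moreover have "\<forall>x\<in>Zp absv. S_op absv (- y) (S_op absv y phi) x = phi x" using c4 c by blast
    ultimately have "bnd phi (sup_norm absv (S_op absv y phi))" unfolding bnd_def by simp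
    then have "sup_norm absv phi \<le> sup_norm absv (S_op absv y phi)" by (rule sup_le)
    with le1 show "sup_norm absv (S_op absv y phi) = sup_norm absv phi" by simp
  qed
  show ?thesis using c1 c2 c3 c4 c5 by blast
qed


end
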